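(* Let $K$ be an algebraically closed field of characteristic zero, $\deg_1$ the weighted degree on $K[x_1,\dots,x_n]$ assigning positive real weights $w_i$ to $x_i$, $\Phi=(f_1,\dots,f_n)$ a polynomial automorphism of $K^n$, $\Phi^{-1}=(g_1,\dots,g_n)$, $d_i=\deg_1(f_i)$, $\deg_2$ the weighted degree assigning weight $d_i$ to $x_i$, $\Delta_i(P)=\mathrm{j}(g_1,\dots,g_{i-1},P,g_{i+1},\dots,g_n)$, and $I=\{Q : Q(\overline{f_1},\dots,\overline{f_n})=0\}$. Let $i$ be an index with $\deg_2(\Delta_i)\ge -w_i$. Then the leading part $\overline{\Delta_i}$ of $\Delta_i$ with respect to $\deg_2$ is locally nilpotent and satisfies $\overline{\Delta_i}(I)\subset I$.
   Context: $\mathrm{j}$ is the jacobian determinant; $\overline{f}$ is the $\deg_1$-leading term of $f$. For a p.w.h. degree $\deg$ and a $K$-derivation $\partial$, $\deg(\partial)=\sup\{\deg(\partial(P))-\deg(P):P\ne0\}$, and the leading part $\overline{\partial}$ is the $K$-derivation sending each $\deg$-homogeneous $P$ to the homogeneous component of $\partial(P)$ of degree $\deg(\partial)+\deg(P)$; equivalently if $\partial=\sum a_i\partial/\partial x_i$ and $r=\deg(\partial)$ then $\overline{\partial}=\sum b_i\partial/\partial x_i$ with $b_i$ the homogeneous component of $a_i$ of degree $r+\deg(x_i)$. *)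

theory Defs
  imports "HOL-Analysis.Analysis" "HOL-Library.Poly_Mapping" "HOL-Library.Extended_Real"
begin

text \<open>Polynomials in the variables indexed by the finite type 'n, coefficients in 'a:
  finitely supported maps from monomials (exponent vectors) to coefficients.\<close>
type_synonym ('n, 'a) mpoly = "('n \<Rightarrow>\<^sub>0 nat) \<Rightarrow>\<^sub>0 'a"

definition alg_closed :: "'a::field itself \<Rightarrow> bool" where
  "alg_closed _ \<longleftrightarrow> (\<forall>(n::nat) (c::nat \<Rightarrow> 'a). n \<ge> 1 \<longrightarrow>
      (\<exists>x::'a. x ^ n + (\<Sum>k<n. c k * x ^ k) = 0))"

definition mconst :: "'a::zero \<Rightarrow> ('n, 'a) mpoly" where
  "mconst c = Poly_Mapping.single 0 c"

definition mvar :: "'n \<Rightarrow> ('n, 'a::{zero,one}) mpoly" where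
  "mvar i = Poly_Mapping.single (Poly_Mapping.single i 1) 1"

definition msubst :: "('n, 'a::comm_ring_1) mpoly \<Rightarrow> ('n \<Rightarrow> ('m, 'a) mpoly) \<Rightarrow> ('m, 'a) mpoly" where
  "msubst Q F = (\<Sum>m\<in>Poly_Mapping.keys Q. mconst (Poly_Mapping.lookup Q m) * (\<Prod>i\<in>Poly_Mapping.keys m. F i ^ Poly_Mapping.lookup m i))"

definition inverse_maps :: "('n \<Rightarrow> ('n, 'a::comm_ring_1) mpoly) \<Rightarrow> ('n \<Rightarrow> ('n, 'a) mpoly) \<Rightarrow> bool" where
  "inverse_maps F G \<longleftrightarrow> (\<forall>i. msubst (F i) G = mvar i) \<and> (\<forall>i. msubst (G i) F = mvar i)"

definition mpderiv :: "'n \<Rightarrow> ('n, 'a::comm_ring_1) mpoly \<Rightarrow> ('n, 'a) mpoly" where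
  "mpderiv j P = (\<Sum>m\<in>Poly_Mapping.keys P.
      Poly_Mapping.single (m - Poly_Mapping.single j 1) (of_nat (Poly_Mapping.lookup m j) * Poly_Mapping.lookup P m))"

definition jac :: "('n::finite \<Rightarrow> ('n, 'a::comm_ring_1) mpoly) \<Rightarrow> ('n, 'a) mpoly" where
  "jac F = det (\<chi> a b. mpderiv b (F a))"

text \<open>Weighted degree of a monomial and of a polynomial (degree of 0 is -\<infinity>).\<close>
definition mdeg :: "('n \<Rightarrow> real) \<Rightarrow> ('n \<Rightarrow>\<^sub>0 nat) \<Rightarrow> real" where
  "mdeg w m = (\<Sum>i\<in>Poly_Mapping.keys m. w i * real (Poly_Mapping.lookup m i))"

definition wdeg :: "('n \<Rightarrow> real) \<Rightarrow> ('n, 'a::zero) mpoly \<Rightarrow> ereal" where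
  "wdeg w P = (SUP m\<in>Poly_Mapping.keys P. ereal (mdeg w m))"

definition hcomp :: "('n \<Rightarrow> real) \<Rightarrow> ereal \<Rightarrow> ('n, 'a::comm_monoid_add) mpoly \<Rightarrow> ('n, 'a) mpoly" where
  "hcomp w r P = (\<Sum>m\<in>{m\<in>Poly_Mapping.keys P. ereal (mdeg w m) = r}. Poly_Mapping.single m (Poly_Mapping.lookup P m))"

definition lead :: "('n \<Rightarrow> real) \<Rightarrow> ('n, 'a::comm_monoid_add) mpoly \<Rightarrow> ('n, 'a) mpoly" where
  "lead w P = hcomp w (wdeg w P) P"

definition der_deg :: "('n \<Rightarrow> real) \<Rightarrow> (('n, 'a::zero) mpoly \<Rightarrow> ('n, 'a) mpoly) \<Rightarrow> ereal" where
  "der_deg w D = (SUP P\<in>{P. P \<noteq> 0}. wdeg w (D P) - wdeg w P)"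

definition lead_der :: "('n::finite \<Rightarrow> real) \<Rightarrow> (('n, 'a::comm_ring_1) mpoly \<Rightarrow> ('n, 'a) mpoly)
    \<Rightarrow> ('n, 'a) mpoly \<Rightarrow> ('n, 'a) mpoly" where
  "lead_der w D P = (\<Sum>j\<in>UNIV. hcomp w (der_deg w D + ereal (w j)) (D (mvar j)) * mpderiv j P)"

definition locally_nilpotent :: "('b \<Rightarrow> 'b::zero) \<Rightarrow> bool" where
  "locally_nilpotent D \<longleftrightarrow> (\<forall>P. \<exists>k. (D ^^ k) P = 0)"

end

theory Submission
  imports Defs
begin


abbreviation lk where "lk \<equiv> Poly_Mapping.lookup"
abbreviation ks where "ks \<equiv> Poly_Mapping.keys"
abbreviation sg where "sg \<equiv> Poly_Mapping.single"

lemma poly_expand: "P = (\<Sum>m\<in>ks P. sg m (lk P m))"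
  by (rule poly_mapping_eqI) (simp add: lookup_sum lookup_single when_def in_keys_iff sum.delta' split: if_splits)

lemma keys_sum_sub: "ks (sum f A) \<subseteq> (\<Union>a\<in>A. ks (f a))"
  by (rule keys_sum)

lemma mult_expand: "(P::('n,'a::comm_ring_1) mpoly) * Q = (\<Sum>a\<in>ks P. \<Sum>b\<in>ks Q. sg (a+b) (lk P a * lk Q b))"
proof -
  have "P * Q = (\<Sum>a\<in>ks P. sg a (lk P a)) * (\<Sum>b\<in>ks Q. sg b (lk Q b))"
    by (metis poly_expand)
  also have "\<dots> = (\<Sum>a\<in>ks P. \<Sum>b\<in>ks Q. sg (a+b) (lk P a * lk Q b))"
    by (simp add: sum_product mult_single)
  finally show ?thesis .
qed

lemma mdeg_UNIV: "mdeg w (m::'n::finite \<Rightarrow>\<^sub>0 nat) = (\<Sum>i\<in>UNIV. w i * real (lk m i))"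
  unfolding mdeg_def by (rule sum.mono_neutral_left) (auto simp: in_keys_iff)

lemma mdeg_add: "mdeg w ((a::'n::finite \<Rightarrow>\<^sub>0 nat) + b) = mdeg w a + mdeg w b"
  by (simp add: mdeg_UNIV lookup_add sum.distrib algebra_simps)

lemma mdeg_zero[simp]: "mdeg w 0 = 0"
  by (simp add: mdeg_def)

lemma mdeg_var: "mdeg w (sg (j::'n::finite) 1) = w j"
  by (simp add: mdeg_def)

lemma mdeg_minus_var: assumes "lk m j \<ge> 1"
  shows "mdeg w ((m::'n::finite \<Rightarrow>\<^sub>0 nat) - sg j 1) = mdeg w m - w j"
proof -
  have "m = (m - sg j 1) + sg j 1"
    by (rule poly_mapping_eqI) (use assms in \<open>auto simp: lookup_add lookup_minus lookup_single when_def\<close>)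
  then have "mdeg w m = mdeg w (m - sg j 1) + w j" by (metis mdeg_add mdeg_var)
  then show ?thesis by simp
qed

lemma mdeg_nonneg: assumes "\<forall>j. w j \<ge> 0" shows "mdeg w (m::'n::finite \<Rightarrow>\<^sub>0 nat) \<ge> 0"
  unfolding mdeg_UNIV using assms by (intro sum_nonneg) auto

lemma mdeg_pos: assumes "\<forall>j. w j > 0" "m \<noteq> 0" shows "mdeg w (m::'n::finite \<Rightarrow>\<^sub>0 nat) > 0"
proof -
  from assms(2) obtain j where j: "lk m j \<noteq> 0" by (metis lookup_zero poly_mapping_eqI)
  have "mdeg w m = (\<Sum>i\<in>UNIV. w i * real (lk m i))" by (rule mdeg_UNIV)
  also have "\<dots> \<ge> w j * real (lk m j)"
    using assms(1) by (intro member_le_sum) (auto intro!: mult_nonneg_nonneg simp: less_imp_le)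
  finally show ?thesis using j assms(1) by (smt (verit) mult_pos_pos of_nat_0_less_iff bot_nat_0.not_eq_extremum)
qed



definition lew :: "('n \<Rightarrow> real) \<Rightarrow> real \<Rightarrow> ('n,'a::zero) mpoly \<Rightarrow> bool" where
  "lew w c P \<longleftrightarrow> (\<forall>m\<in>ks P. mdeg w m \<le> c)"
definition ltw :: "('n \<Rightarrow> real) \<Rightarrow> real \<Rightarrow> ('n,'a::zero) mpoly \<Rightarrow> bool" where
  "ltw w c P \<longleftrightarrow> (\<forall>m\<in>ks P. mdeg w m < c)"
definition homw :: "('n \<Rightarrow> real) \<Rightarrow> real \<Rightarrow> ('n,'a::zero) mpoly \<Rightarrow> bool" where
  "homw w c P \<longleftrightarrow> (\<forall>m\<in>ks P. mdeg w m = c)"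

lemmas wdefs = lew_def ltw_def homw_def

lemma w_zero[simp]: "lew w c 0" "ltw w c 0" "homw w c 0"
  by (auto simp: wdefs)

lemma w_add:
  fixes P Q :: "('n,'a::comm_monoid_add) mpoly"
  shows "lew w c P \<Longrightarrow> lew w c Q \<Longrightarrow> lew w c (P + Q)"
    "ltw w c P \<Longrightarrow> ltw w c Q \<Longrightarrow> ltw w c (P + Q)"
    "homw w c P \<Longrightarrow> homw w c Q \<Longrightarrow> homw w c (P + Q)"
  using keys_add[of P Q] by (auto simp: wdefs)

lemma w_diff:
  fixes P Q :: "('n,'a::ab_group_add) mpoly"
  shows "lew w c P \<Longrightarrow> lew w c Q \<Longrightarrow> lew w c (P - Q)"
    "ltw w c P \<Longrightarrow> ltw w c Q \<Longrightarrow> ltw w c (P - Q)"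
    "homw w c P \<Longrightarrow> homw w c Q \<Longrightarrow> homw w c (P - Q)"
  using keys_diff[of P Q] by (auto simp: wdefs)

lemma w_uminus[simp]:
  fixes P :: "('n,'a::ab_group_add) mpoly"
  shows "lew w c (-P) = lew w c P" "ltw w c (-P) = ltw w c P" "homw w c (-P) = homw w c P"
  by (auto simp: wdefs)

lemma w_sum:
  fixes P :: "'b \<Rightarrow> ('n,'a::comm_monoid_add) mpoly"
  shows "(\<And>x. x \<in> A \<Longrightarrow> lew w c (P x)) \<Longrightarrow> lew w c (sum P A)"
    "(\<And>x. x \<in> A \<Longrightarrow> ltw w c (P x)) \<Longrightarrow> ltw w c (sum P A)"
    "(\<And>x. x \<in> A \<Longrightarrow> homw w c (P x)) \<Longrightarrow> homw w c (sum P A)"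
  using keys_sum[of P A] by (auto simp: wdefs)

lemma w_mono:
  "lew w a P \<Longrightarrow> a \<le> b \<Longrightarrow> lew w b P"
  "lew w a P \<Longrightarrow> a < b \<Longrightarrow> ltw w b P"
  "ltw w a P \<Longrightarrow> a \<le> b \<Longrightarrow> ltw w b P"
  "homw w a P \<Longrightarrow> lew w a P"
  "ltw w a P \<Longrightarrow> lew w a P"
  by (auto simp: wdefs)

lemma lt_hom_zero: "ltw w c P \<Longrightarrow> homw w c P \<Longrightarrow> P = 0"
  by (auto simp: wdefs simp flip: keys_eq_empty)

lemma homw_single: "homw w (mdeg w m) (sg m c)"
  by (simp add: wdefs)

lemma keys_mult_sub: "m \<in> ks (P * Q) \<Longrightarrow> \<exists>a\<in>ks P. \<exists>b\<in>ks Q. m = a + b"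
  using keys_mult[of P Q] by blast

lemma w_mult:
  fixes P Q :: "('n::finite,'a::comm_ring_1) mpoly"
  shows "lew w a P \<Longrightarrow> lew w b Q \<Longrightarrow> lew w (a+b) (P * Q)"
    "ltw w a P \<Longrightarrow> lew w b Q \<Longrightarrow> ltw w (a+b) (P * Q)"
    "lew w a P \<Longrightarrow> ltw w b Q \<Longrightarrow> ltw w (a+b) (P * Q)"
    "homw w a P \<Longrightarrow> homw w b Q \<Longrightarrow> homw w (a+b) (P * Q)"
  by (auto simp: wdefs mdeg_add dest!: keys_mult_sub; meson add_mono add_less_le_mono add_le_less_mono)+

lemma homw_one[simp]: "homw w 0 (1::('n,'a::comm_ring_1) mpoly)"
  by (simp add: wdefs)

lemma homw_mconst[simp]: "homw w 0 (mconst c)"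
  by (simp add: wdefs mconst_def)

lemma w_power1:
  fixes P :: "('n::finite,'a::comm_ring_1) mpoly"
  shows "lew w a P \<Longrightarrow> lew w (real k * a) (P ^ k)"
proof (induction k)
  case 0 show ?case using w_mono(4)[OF homw_one] by simp
next
  case (Suc k) then show ?case using w_mult(1)[of w a P "real k * a" "P^k"]
    by (simp add: algebra_simps)
qed

lemma w_power2:
  fixes P :: "('n::finite,'a::comm_ring_1) mpoly"
  shows "homw w a P \<Longrightarrow> homw w (real k * a) (P ^ k)"
proof (induction k)
  case 0 show ?case by simp
next
  case (Suc k) then show ?case using w_mult(4)[of w a P "real k * a" "P^k"]
    by (simp add: algebra_simps)
qed



definition mon :: "('n \<Rightarrow> ('m, 'a::comm_ring_1) mpoly) \<Rightarrow> ('n \<Rightarrow>\<^sub>0 nat) \<Rightarrow> ('m,'a) mpoly" where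
  "mon F m = (\<Prod>i\<in>ks m. F i ^ lk m i)"

lemma mon_UNIV: "mon F (m::'n::finite \<Rightarrow>\<^sub>0 nat) = (\<Prod>i\<in>UNIV. F i ^ lk m i)"
  unfolding mon_def by (rule prod.mono_neutral_left) (auto simp: in_keys_iff)

lemma mon_add: "mon F ((a::'n::finite \<Rightarrow>\<^sub>0 nat) + b) = mon F a * mon F b"
  by (simp add: mon_UNIV lookup_add power_add prod.distrib)

lemma mon_zero[simp]: "mon F 0 = 1"
  by (simp add: mon_def)

lemma msubst_def': "msubst Q F = (\<Sum>m\<in>ks Q. mconst (lk Q m) * mon F m)"
  by (simp add: msubst_def mon_def)

lemma mconst_0[simp]: "mconst 0 = 0" by (simp add: mconst_def)
lemma mconst_1[simp]: "mconst 1 = 1" by (simp add: mconst_def)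
lemma mconst_add: "mconst (a + b) = mconst a + mconst b" by (simp add: mconst_def single_add)
lemma mconst_mult: "mconst (a * b) = (mconst a * mconst b :: ('n,'a::comm_ring_1) mpoly)"
  by (simp add: mconst_def mult_single)
lemma mconst_uminus: "mconst (- a) = - (mconst a :: ('n,'a::comm_ring_1) mpoly)"
  by (simp add: mconst_def single_uminus)

lemma msubst_alt:
  assumes "finite S" "ks Q \<subseteq> S"
  shows "msubst Q F = (\<Sum>m\<in>S. mconst (lk Q m) * mon F m)"
  unfolding msubst_def' using assms
  by (intro sum.mono_neutral_left) (auto simp: in_keys_iff)

lemma msubst_zero[simp]: "msubst 0 F = 0"
  by (simp add: msubst_def)

lemma msubst_add: "msubst (P + Q) F = msubst P F + msubst Q F"
proof -
  let ?S = "ks P \<union> ks Q"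
  have "msubst (P + Q) F = (\<Sum>m\<in>?S. mconst (lk (P+Q) m) * mon F m)"
    by (rule msubst_alt) (auto simp: keys_add)
  also have "\<dots> = (\<Sum>m\<in>?S. mconst (lk P m) * mon F m) + (\<Sum>m\<in>?S. mconst (lk Q m) * mon F m)"
    by (simp add: lookup_add mconst_add distrib_right sum.distrib)
  also have "\<dots> = msubst P F + msubst Q F"
    using msubst_alt[of "ks P \<union> ks Q" P F] msubst_alt[of "ks P \<union> ks Q" Q F] by simp
  finally show ?thesis .
qed

lemma msubst_sum: "msubst (sum P A) F = (\<Sum>x\<in>A. msubst (P x) F)"
  by (induction A rule: infinite_finite_induct) (auto simp: msubst_add)

lemma msubst_single: "msubst (sg m c) F = mconst c * mon F m"
proof -
  have "msubst (sg m c) F = (\<Sum>m'\<in>{m}. mconst (lk (sg m c) m') * mon F m')"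
    by (rule msubst_alt) auto
  then show ?thesis by simp
qed

lemma msubst_uminus: "msubst (- P) F = - msubst P F"
  by (metis add_eq_0_iff2 msubst_add msubst_zero neg_eq_iff_add_eq_0)

lemma msubst_diff: "msubst (P - Q) F = msubst P F - msubst Q F"
  by (metis diff_conv_add_uminus msubst_add msubst_uminus)

lemma msubst_mult: "msubst (P * Q) (F::'n::finite \<Rightarrow> ('m,'a::comm_ring_1) mpoly) = msubst P F * msubst Q F"
proof -
  have "msubst (P * Q) F = (\<Sum>a\<in>ks P. \<Sum>b\<in>ks Q. msubst (sg (a+b) (lk P a * lk Q b)) F)"
    by (subst mult_expand) (simp add: msubst_sum)
  also have "\<dots> = (\<Sum>a\<in>ks P. \<Sum>b\<in>ks Q. (mconst (lk P a) * mon F a) * (mconst (lk Q b) * mon F b))"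
    by (simp add: msubst_single mon_add mconst_mult ac_simps)
  also have "\<dots> = msubst P F * msubst Q F"
    by (simp add: msubst_def' sum_product)
  finally show ?thesis .
qed

lemma msubst_mconst[simp]: "msubst (mconst c) F = mconst c"
  by (simp add: mconst_def msubst_single)

lemma msubst_one[simp]: "msubst 1 F = 1"
  by (metis mconst_1 msubst_mconst)

lemma msubst_power: "msubst (P ^ k) (F::'n::finite \<Rightarrow> ('m,'a::comm_ring_1) mpoly) = msubst P F ^ k"
  by (induction k) (simp_all add: msubst_mult)

lemma msubst_prod: "msubst (prod P A) (F::'n::finite \<Rightarrow> ('m,'a::comm_ring_1) mpoly) = (\<Prod>x\<in>A. msubst (P x) F)"
  by (induction A rule: infinite_finite_induct) (auto simp: msubst_mult)

lemma of_int_mconst: "(of_int k :: ('n,'a::comm_ring_1) mpoly) = mconst (of_int k)"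
  by (simp add: mconst_def)

lemma msubst_of_int[simp]: "msubst (of_int k) F = of_int k"
  by (simp add: of_int_mconst)

lemma msubst_mvar[simp]: "msubst (mvar j) F = F j"
  by (simp add: mvar_def msubst_single mon_def mconst_def)

lemma msubst_comp:
  "msubst (msubst Q G) (F::'n::finite \<Rightarrow> ('m,'a::comm_ring_1) mpoly) = msubst Q (\<lambda>j. msubst (G j) F)"
proof -
  have "msubst Q G = (\<Sum>m\<in>ks Q. mconst (lk Q m) * (\<Prod>i\<in>ks m. G i ^ lk m i))"
    by (simp add: msubst_def' mon_def)
  then show ?thesis
    by (simp only: msubst_sum msubst_mult msubst_prod msubst_power msubst_mconst)
      (simp only: msubst_def'[of Q] mon_def)
qed

lemma mvar_power: "mvar i ^ k = sg (sg i k) (1::'a::comm_ring_1)"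
  by (induction k) (simp_all add: mvar_def mult_single single_add[symmetric] add.commute)

lemma mon_mvar: "mon mvar (m::'n::finite \<Rightarrow>\<^sub>0 nat) = (sg m (1::'a::comm_ring_1))"
proof -
  have "mon mvar m = (\<Prod>i\<in>UNIV. sg (sg i (lk m i)) (1::'a))"
    by (simp add: mon_UNIV mvar_power)
  also have "\<dots> = sg (\<Sum>i\<in>UNIV. sg i (lk m i)) 1"
    by (induction rule: infinite_finite_induct) (auto simp: mult_single)
  also have "(\<Sum>i\<in>UNIV. sg i (lk m i)) = m"
    by (rule poly_mapping_eqI) (simp add: lookup_sum lookup_single when_def)
  finally show ?thesis .
qed

lemma msubst_id: "msubst Q (mvar :: 'n::finite \<Rightarrow> ('n,'a::comm_ring_1) mpoly) = Q"
  by (subst (2) poly_expand) (simp add: msubst_def' mon_mvar mconst_def mult_single)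

lemma inverse_maps_inj:
  assumes "inverse_maps F G"
  shows "msubst (msubst X F) G = (X :: ('n::finite,'a::comm_ring_1) mpoly)"
  using assms by (simp add: msubst_comp inverse_maps_def msubst_id)

lemma mconst_eq_0_iff[simp]: "mconst c = 0 \<longleftrightarrow> c = 0"
  unfolding mconst_def by (metis lookup_single_eq single_zero)



abbreviation pd where "pd \<equiv> mpderiv"

lemma pd_alt:
  assumes "finite S" "ks P \<subseteq> S"
  shows "pd j P = (\<Sum>m\<in>S. sg (m - sg j 1) (of_nat (lk m j) * lk P m))"
  unfolding mpderiv_def using assms
  by (intro sum.mono_neutral_left) (auto simp: in_keys_iff)

lemma pd_zero[simp]: "pd j 0 = 0"
  by (simp add: mpderiv_def)

lemma pd_add: "pd j (P + Q) = pd j P + pd j Q"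
proof -
  let ?S = "ks P \<union> ks Q"
  have "pd j (P + Q) = (\<Sum>m\<in>?S. sg (m - sg j 1) (of_nat (lk m j) * lk (P+Q) m))"
    by (rule pd_alt) (auto simp: keys_add)
  also have "\<dots> = (\<Sum>m\<in>?S. sg (m - sg j 1) (of_nat (lk m j) * lk P m)) + (\<Sum>m\<in>?S. sg (m - sg j 1) (of_nat (lk m j) * lk Q m))"
    by (simp add: lookup_add distrib_left single_add sum.distrib)
  also have "\<dots> = pd j P + pd j Q"
    using pd_alt[of "ks P \<union> ks Q" P j] pd_alt[of "ks P \<union> ks Q" Q j] by simp
  finally show ?thesis .
qed

lemma pd_sum: "pd j (sum P A) = (\<Sum>x\<in>A. pd j (P x))"
  by (induction A rule: infinite_finite_induct) (auto simp: pd_add)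

lemma pd_uminus: "pd j (- P) = - pd j P"
  by (metis add_eq_0_iff2 pd_add pd_zero neg_eq_iff_add_eq_0)

lemma pd_diff: "pd j (P - Q) = pd j P - pd j Q"
  by (metis diff_conv_add_uminus pd_add pd_uminus)

lemma pd_single: "pd j (sg m c) = sg (m - sg j 1) (of_nat (lk m j) * c)"
proof -
  have "pd j (sg m c) = (\<Sum>m'\<in>{m}. sg (m' - sg j 1) (of_nat (lk m' j) * lk (sg m c) m'))"
    by (rule pd_alt) auto
  then show ?thesis by simp
qed

lemma monus_add: "lk a j \<ge> 1 \<Longrightarrow> (a::'n \<Rightarrow>\<^sub>0 nat) - sg j 1 + b = a + b - sg j 1"
  by (rule poly_mapping_eqI) (auto simp: lookup_add lookup_minus lookup_single when_def)

lemma monus_add2: "lk b j \<ge> 1 \<Longrightarrow> a + ((b::'n \<Rightarrow>\<^sub>0 nat) - sg j 1) = a + b - sg j 1"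
  by (rule poly_mapping_eqI) (auto simp: lookup_add lookup_minus lookup_single when_def)

lemma pd_single_mult:
  "pd j (sg a p * sg b q) = pd j (sg a p) * sg b q + sg a p * pd j (sg b (q::'a::comm_ring_1))"
proof -
  have L: "pd j (sg a p * sg b q) = sg (a + b - sg j 1) (of_nat (lk a j) * p * q) + sg (a + b - sg j 1) (of_nat (lk b j) * p * q)"
    by (simp add: mult_single pd_single lookup_add single_add[symmetric] algebra_simps)
  have 1: "pd j (sg a p) * sg b q = sg (a + b - sg j 1) (of_nat (lk a j) * p * q)"
  proof (cases "lk a j \<ge> 1")
    case True then show ?thesis using monus_add[OF True, of b] by (simp add: pd_single mult_single)
  next
    case False then have "lk a j = 0" by simp
    then show ?thesis by (simp add: pd_single)
  qed
  have 2: "sg a p * pd j (sg b q) = sg (a + b - sg j 1) (of_nat (lk b j) * p * q)"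
  proof (cases "lk b j \<ge> 1")
    case True then show ?thesis
      using monus_add2[OF True, of a] by (simp add: pd_single mult_single mult.assoc mult.left_commute)
  next
    case False then have "lk b j = 0" by simp
    then show ?thesis by (simp add: pd_single)
  qed
  show ?thesis using L 1 2 by simp
qed

lemma pd_mult: "pd j (P * Q) = pd j P * Q + P * pd j (Q::('n,'a::comm_ring_1) mpoly)"
proof -
  have "pd j (P * Q) = (\<Sum>a\<in>ks P. \<Sum>b\<in>ks Q. pd j (sg a (lk P a) * sg b (lk Q b)))"
    by (subst mult_expand) (simp add: pd_sum mult_single)
  also have "\<dots> = (\<Sum>a\<in>ks P. \<Sum>b\<in>ks Q. pd j (sg a (lk P a)) * sg b (lk Q b))
      + (\<Sum>a\<in>ks P. \<Sum>b\<in>ks Q. sg a (lk P a) * pd j (sg b (lk Q b)))"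
    by (simp add: pd_single_mult sum.distrib)
  also have "\<dots> = pd j (\<Sum>a\<in>ks P. sg a (lk P a)) * (\<Sum>b\<in>ks Q. sg b (lk Q b))
      + (\<Sum>a\<in>ks P. sg a (lk P a)) * pd j (\<Sum>b\<in>ks Q. sg b (lk Q b))"
    by (simp add: pd_sum sum_product)
  also have "\<dots> = pd j P * Q + P * pd j Q"
    by (simp flip: poly_expand)
  finally show ?thesis .
qed

lemma pd_mconst[simp]: "pd j (mconst c) = 0"
  by (simp add: mconst_def pd_single)

lemma pd_one[simp]: "pd j 1 = 0"
  by (metis mconst_1 pd_mconst)

lemma pd_mvar: "pd j (mvar i) = (if j = i then 1 else 0)"
  by (simp add: mvar_def pd_single lookup_single when_def)

lemma pd_mconst_mult: "pd j (mconst c * P) = mconst c * pd j P"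
  by (simp add: pd_mult)

lemma gen_induct:
  assumes c: "\<And>c. S (mconst c)" and v: "\<And>i. S (mvar i)"
    and a: "\<And>P Q. S P \<Longrightarrow> S Q \<Longrightarrow> S (P+Q)" and m: "\<And>P Q. S P \<Longrightarrow> S Q \<Longrightarrow> S (P*Q)"
  shows "S (P::('n::finite,'a::comm_ring_1) mpoly)"
proof -
  have pw: "S (mvar i ^ k)" for i k
    by (induction k) (use c[of 1] v m in auto)
  have pr: "S (prod f A)" if "\<And>x. x \<in> A \<Longrightarrow> S (f x)" for f :: "'n \<Rightarrow> ('n,'a) mpoly" and A
    using that by (induction A rule: infinite_finite_induct) (use c[of 1] m in auto)
  have sm: "S (sum f A)" if "\<And>x. x \<in> A \<Longrightarrow> S (f x)" for f :: "('n \<Rightarrow>\<^sub>0 nat) \<Rightarrow> ('n,'a) mpoly" and A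
    using that by (induction A rule: infinite_finite_induct) (use c[of 0] a in auto)
  have "P = (\<Sum>m\<in>ks P. mconst (lk P m) * mon mvar m)"
    by (subst poly_expand) (simp add: mon_mvar mconst_def mult_single)
  also have "S \<dots>"
    by (intro sm m c) (simp add: mon_def pr pw)
  finally show ?thesis .
qed

lemma chain_rule:
  "pd j (msubst Q F) = (\<Sum>k\<in>UNIV. msubst (pd k Q) F * pd j (F k))"
  for Q :: "('n::finite,'a::comm_ring_1) mpoly" and F :: "'n \<Rightarrow> ('m::finite,'a) mpoly"
proof (induction Q rule: gen_induct)
  case (1 c) then show ?case by simp
next
  case (2 i)
  have "\<And>k. msubst (pd k (mvar i)) F * pd j (F k) = (if k = i then pd j (F k) else 0)"
    by (simp add: pd_mvar)
  then show ?case by simp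
next
  case (3 P Q) then show ?case by (simp add: msubst_add pd_add distrib_right sum.distrib)
next
  case (4 P Q)
  let ?f = "\<lambda>X. msubst X F"
  have "(\<Sum>k\<in>UNIV. ?f (pd k (P * Q)) * pd j (F k))
     = (\<Sum>k\<in>UNIV. ?f (pd k P) * pd j (F k) * ?f Q + ?f P * (?f (pd k Q) * pd j (F k)))"
    by (intro sum.cong refl) (simp add: pd_mult msubst_add msubst_mult algebra_simps)
  also have "\<dots> = (\<Sum>k\<in>UNIV. ?f (pd k P) * pd j (F k)) * ?f Q + ?f P * (\<Sum>k\<in>UNIV. ?f (pd k Q) * pd j (F k))"
    by (simp add: sum.distrib sum_distrib_left sum_distrib_right)
  also have "\<dots> = pd j (msubst (P * Q) F)"
    using 4 by (simp only: msubst_mult pd_mult)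
  finally show ?case by simp
qed

lemma keys_pd: "m \<in> ks (pd j P) \<Longrightarrow> \<exists>m'\<in>ks P. lk m' j \<ge> 1 \<and> m = m' - sg j 1"
proof -
  assume a: "m \<in> ks (pd j P)"
  have "m \<in> (\<Union>m'\<in>ks P. ks (sg (m' - sg j 1) (of_nat (lk m' j) * lk P m')))"
    using keys_sum[of "\<lambda>m'. sg (m' - sg j 1) (of_nat (lk m' j) * lk P m')" "ks P"] a
    unfolding mpderiv_def by (rule subsetD)
  then obtain m' where m': "m' \<in> ks P" "m \<in> ks (sg (m' - sg j 1) (of_nat (lk m' j) * lk P m'))"
    by (rule UN_E)
  then have "of_nat (lk m' j) * lk P m' \<noteq> 0" "m = m' - sg j 1"
    by (simp_all split: if_splits)
  then have "lk m' j \<noteq> 0" by (metis mult_zero_left of_nat_0)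
  with m' \<open>m = m' - sg j 1\<close> show ?thesis by force
qed

lemma w_pd:
  fixes P :: "('n::finite,'a::comm_ring_1) mpoly"
  shows "lew w c P \<Longrightarrow> lew w (c - w j) (pd j P)"
    "ltw w c P \<Longrightarrow> ltw w (c - w j) (pd j P)"
    "homw w c P \<Longrightarrow> homw w (c - w j) (pd j P)"
proof -
  have aux: "\<exists>m'\<in>ks P. mdeg w m = mdeg w m' - w j" if mk: "m \<in> ks (pd j P)" for m
  proof -
    obtain m' where "m' \<in> ks P" "lk m' j \<ge> 1" "m = m' - sg j 1" using keys_pd[OF mk] by blast
    then show ?thesis using mdeg_minus_var[of m' j w] by blast
  qed
  show "lew w c P \<Longrightarrow> lew w (c - w j) (pd j P)" unfolding lew_def
  proof
    fix m assume "\<forall>m\<in>ks P. mdeg w m \<le> c" "m \<in> ks (pd j P)"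
    then obtain m' where "m' \<in> ks P" "mdeg w m = mdeg w m' - w j" using aux[of m] by blast
    with \<open>\<forall>m\<in>ks P. mdeg w m \<le> c\<close> show "mdeg w m \<le> c - w j" by simp
  qed
  show "ltw w c P \<Longrightarrow> ltw w (c - w j) (pd j P)" unfolding ltw_def
  proof
    fix m assume "\<forall>m\<in>ks P. mdeg w m < c" "m \<in> ks (pd j P)"
    then obtain m' where "m' \<in> ks P" "mdeg w m = mdeg w m' - w j" using aux[of m] by blast
    with \<open>\<forall>m\<in>ks P. mdeg w m < c\<close> show "mdeg w m < c - w j" by simp
  qed
  show "homw w c P \<Longrightarrow> homw w (c - w j) (pd j P)" unfolding homw_def
  proof
    fix m assume "\<forall>m\<in>ks P. mdeg w m = c" "m \<in> ks (pd j P)"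
    then obtain m' where "m' \<in> ks P" "mdeg w m = mdeg w m' - w j" using aux[of m] by blast
    with \<open>\<forall>m\<in>ks P. mdeg w m = c\<close> show "mdeg w m = c - w j" by simp
  qed
qed

lemma lew_exists: "\<exists>c. lew w c P"
  unfolding lew_def by (intro exI[of _ "Max (insert 0 (mdeg w ` ks P))"] ballI Max_ge) auto

lemma pd_iter_zero: "\<exists>k. (pd i ^^ k) (R::('n::finite,'a::comm_ring_1) mpoly) = 0"
proof -
  define ind where "ind = (\<lambda>k::'n. if k = i then 1 else (0::real))"
  obtain c where c: "lew ind c R" using lew_exists by blast
  have it: "lew ind (c - real k) ((pd i ^^ k) R)" for k
  proof (induction k)
    case 0 then show ?case using c by simp
  next
    case (Suc k)
    have "lew ind (c - real k - ind i) (pd i ((pd i ^^ k) R))" by (rule w_pd(1)[OF Suc.IH])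
    moreover have "c - real k - ind i = c - real (Suc k)" by (simp add: ind_def)
    ultimately show ?case by simp
  qed
  obtain k where k: "c - real k < 0" using reals_Archimedean2[of c] by auto
  have "ks ((pd i ^^ k) R) = {}"
  proof (rule ccontr)
    assume "ks ((pd i ^^ k) R) \<noteq> {}"
    then obtain m where "m \<in> ks ((pd i ^^ k) R)" by blast
    with it[of k] have "mdeg ind m \<le> c - real k" by (auto simp: lew_def)
    moreover have "mdeg ind m \<ge> 0" by (rule mdeg_nonneg) (simp add: ind_def)
    ultimately show False using k by simp
  qed
  then show ?thesis by auto
qed



lemma msubst_det:
  "msubst (det A) F = det (\<chi> a b. msubst (A$a$b) F)"
  for A :: "('n::finite, 'a::comm_ring_1) mpoly ^'k::finite^'k" and F :: "'n \<Rightarrow> ('m,'a) mpoly"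
  unfolding det_def by (simp add: msubst_sum msubst_mult msubst_prod)

lemma jac_mult:
  fixes H F :: "'n::finite \<Rightarrow> ('n,'a::comm_ring_1) mpoly"
  shows "msubst (jac H) F * jac F = det (\<chi> a c. pd c (msubst (H a) F))"
proof -
  have "msubst (jac H) F * jac F = det ((\<chi> a b. msubst (pd b (H a)) F) ** (\<chi> b c. pd c (F b)))"
    by (simp add: jac_def msubst_det det_mul)
  also have "(\<chi> a b. msubst (pd b (H a)) F) ** (\<chi> b c. pd c (F b)) = (\<chi> a c. pd c (msubst (H a) F))"
    by (simp add: matrix_matrix_mult_def chain_rule vec_eq_iff)
  finally show ?thesis .
qed

lemma det_row_lin:
  fixes C :: "'n::finite \<Rightarrow> 'a::comm_ring_1^'n"
  assumes that: "finite S"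
  shows "det (\<chi> a. if a = k then (\<Sum>j\<in>S. x j *s v j) else C a) = (\<Sum>j\<in>S. x j * det (\<chi> a. if a = k then v j else C a))"
proof -
  have "det (\<chi> a. if a = k then (\<Sum>j\<in>S. x j *s v j) else C a) = (\<Sum>j\<in>S. det (\<chi> a. if a = k then x j *s v j else C a))"
    using det_linear_row_sum[OF that, of k "\<lambda>_ j. x j *s v j" C] by simp
  also have "\<dots> = (\<Sum>j\<in>S. x j * det (\<chi> a. if a = k then v j else C a))"
    by (simp add: det_row_mul)
  finally show ?thesis .
qed

lemma row_expand: "(\<chi> c. f c) = (\<Sum>j\<in>UNIV. f j *s (\<chi> c. if c = j then 1 else 0)) "
  for f :: "'n::finite \<Rightarrow> 'a::comm_ring_1"
  by (simp add: vec_eq_iff sum_component if_distrib[of "\<lambda>x. _ * x"] cong: if_cong)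

lemma det_unit_rows:
  "det (\<chi> a. if a = i then (\<chi> c. if c = j then 1 else 0) else (\<chi> c. if c = a then 1 else 0))
     = (if j = i then 1 else (0::'a::comm_ring_1))" for i j :: "'n::finite"
proof (cases "j = i")
  case True
  have "(\<chi> a. if a = i then (\<chi> c. if c = j then 1 else 0) else (\<chi> c. if c = a then 1 else 0)) = (mat 1 :: 'a^'n^'n)"
    using True by (simp add: vec_eq_iff mat_def)
  then show ?thesis using True by simp
next
  case False
  show ?thesis using False
    by (subst det_identical_rows[of i j]) (auto simp: row_def vec_eq_iff)
qed

lemma jac_upd: "jac (G(i := P)) = det (\<chi> a. if a = i then (\<chi> c. pd c P) else (\<chi> c. pd c (G a)))"
  unfolding jac_def by (rule arg_cong[where f=det]) (simp add: vec_eq_iff)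

lemma delta_expand:
  fixes G :: "'n::finite \<Rightarrow> ('n,'a::comm_ring_1) mpoly"
  shows "jac (G(i := P)) = (\<Sum>j\<in>UNIV. jac (G(i := mvar j)) * pd j P)"
proof -
  have "jac (G(i := P)) = det (\<chi> a. if a = i then (\<Sum>j\<in>UNIV. pd j P *s (\<chi> c. if c = j then 1 else 0)) else (\<chi> c. pd c (G a)))"
    by (simp only: jac_upd row_expand[of "\<lambda>c. pd c P", symmetric])
  also have "\<dots> = (\<Sum>j\<in>UNIV. pd j P * det (\<chi> a. if a = i then (\<chi> c. if c = j then 1 else 0) else (\<chi> c. pd c (G a))))"
    by (rule det_row_lin) simp
  also have "\<dots> = (\<Sum>j\<in>UNIV. jac (G(i := mvar j)) * pd j P)"
    by (simp add: jac_upd pd_mvar mult.commute eq_commute[of _ "_::'n"] cong: if_cong)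
  finally show ?thesis .
qed

lemma key_formula:
  fixes F G :: "'n::finite \<Rightarrow> ('n,'a::comm_ring_1) mpoly"
  assumes "inverse_maps F G"
  shows "msubst (jac (G(i := Q))) F * jac F = pd i (msubst Q F)"
proof -
  have GF: "msubst (G a) F = mvar a" for a using assms by (simp add: inverse_maps_def)
  have "msubst (jac (G(i := Q))) F * jac F = det (\<chi> a c. pd c (msubst ((G(i := Q)) a) F))"
    by (rule jac_mult)
  also have "\<dots> = det (\<chi> a. if a = i then (\<chi> c. pd c (msubst Q F)) else (\<chi> c. if c = a then 1 else 0))"
    by (rule arg_cong[where f=det]) (simp add: vec_eq_iff GF pd_mvar eq_commute[of _ "_::'n"])
  also have "\<dots> = det (\<chi> a. if a = i then (\<Sum>j\<in>UNIV. pd j (msubst Q F) *s (\<chi> c. if c = j then 1 else 0)) else (\<chi> c. if c = a then 1 else 0))"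
    by (simp only: row_expand[of "\<lambda>c. pd c (msubst Q F)", symmetric])
  also have "\<dots> = pd i (msubst Q F)"
    by (subst det_row_lin) (simp_all add: det_unit_rows if_distrib[of "\<lambda>x. _ * x"] cong: if_cong)
  finally show ?thesis .
qed



definition mu :: "('n::finite \<Rightarrow>\<^sub>0 nat) \<Rightarrow> (nat \<Rightarrow>\<^sub>0 nat)" where
  "mu m = (\<Sum>j\<in>UNIV. sg (to_nat j) (lk m j))"

lemma lk_mu: "lk (mu m) (to_nat j) = lk m j"
  by (simp add: mu_def lookup_sum lookup_single when_def)

lemma mu_inj: "mu a = mu b \<Longrightarrow> a = b"
  by (rule poly_mapping_eqI) (metis lk_mu)

lemma mu_add: "mu (a + b) = mu a + mu b"
  by (simp add: mu_def lookup_add single_add sum.distrib)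

lemma mult_nonzero:
  fixes P Q :: "('n::finite, 'a::idom) mpoly"
  assumes "P \<noteq> 0" "Q \<noteq> 0"
  shows "P * Q \<noteq> 0"
proof -
  have fP: "finite (mu ` ks P)" "mu ` ks P \<noteq> {}" using assms by auto
  have fQ: "finite (mu ` ks Q)" "mu ` ks Q \<noteq> {}" using assms by auto
  obtain a where a: "a \<in> ks P" "mu a = Max (mu ` ks P)" using Max_in[OF fP] by auto
  obtain b where b: "b \<in> ks Q" "mu b = Max (mu ` ks Q)" using Max_in[OF fQ] by auto
  have key: "x + y = a + b \<longleftrightarrow> x = a \<and> y = b" if "x \<in> ks P" "y \<in> ks Q" for x y
  proof
    assume e: "x + y = a + b"
    have lx: "mu x \<le> mu a" using a fP that by auto
    have ly: "mu y \<le> mu b" using b fQ that by auto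
    have s: "mu x + mu y = mu a + mu b" using e by (metis mu_add)
    have "mu x = mu a"
    proof (rule ccontr)
      assume "mu x \<noteq> mu a" then have "mu x < mu a" using lx by simp
      then have "mu x + mu y < mu a + mu b" using ly by (rule add_less_le_mono)
      then show False using s by simp
    qed
    moreover have "mu y = mu b"
    proof (rule ccontr)
      assume "mu y \<noteq> mu b" then have "mu y < mu b" using ly by simp
      then have "mu x + mu y < mu a + mu b" by (rule add_le_less_mono[OF lx])
      then show False using s by simp
    qed
    ultimately show "x = a \<and> y = b" by (auto intro: mu_inj)
  qed auto
  have "lk (P * Q) (a + b) = (\<Sum>x\<in>ks P. \<Sum>y\<in>ks Q. (if x = a \<and> y = b then lk P x * lk Q y else 0))"
    by (subst mult_expand) (auto simp: lookup_sum lookup_single when_def key intro!: sum.cong)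
  also have "\<dots> = lk P a * lk Q b"
  proof -
    have "(\<Sum>y\<in>ks Q. (if x = a \<and> y = b then lk P x * lk Q y else 0)) = (if x = a then lk P a * lk Q b else 0)" for x
      using b(1) by (cases "x = a") (simp_all add: sum.delta')
    then show ?thesis using a(1) by (simp add: sum.delta')
  qed
  also have "\<dots> \<noteq> 0" using a b by (simp add: in_keys_iff)
  finally show ?thesis by auto
qed

lemma lk_hcomp: "lk (hcomp w r P) m = (if ereal (mdeg w m) = r then lk P m else 0)"
  unfolding hcomp_def by (auto simp: lookup_sum lookup_single when_def in_keys_iff sum.delta')

lemma hcomp_w:
  fixes P :: "('n,'a::ab_group_add) mpoly"
  shows "homw w c (hcomp w (ereal c) P)"
  "lew w c P \<Longrightarrow> ltw w c (P - hcomp w (ereal c) P)"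
proof -
  show "homw w c (hcomp w (ereal c) P)"
    by (auto simp: wdefs in_keys_iff lk_hcomp split: if_splits)
  assume le: "lew w c P"
  show "ltw w c (P - hcomp w (ereal c) P)" unfolding ltw_def
  proof
    fix m assume "m \<in> ks (P - hcomp w (ereal c) P)"
    then have "lk P m - lk (hcomp w (ereal c) P) m \<noteq> 0" by (simp add: in_keys_iff lookup_minus)
    then have "mdeg w m \<noteq> c" "m \<in> ks P" by (auto simp: lk_hcomp in_keys_iff split: if_splits)
    then show "mdeg w m < c" using le by (auto simp: lew_def)
  qed
qed

lemma top_decomp:
  fixes P :: "('n,'a::ab_group_add) mpoly" and w :: "'n \<Rightarrow> real"
  assumes "P \<noteq> 0"
  shows "\<exists>a. homw w a (hcomp w (ereal a) P) \<and> hcomp w (ereal a) P \<noteq> 0 \<and> ltw w a (P - hcomp w (ereal a) P) \<and> lew w a P"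
proof -
  let ?a = "Max (mdeg w ` ks P)"
  have f: "finite (mdeg w ` ks P)" "mdeg w ` ks P \<noteq> {}" using assms by auto
  obtain m where m: "m \<in> ks P" "mdeg w m = ?a" using Max_in[OF f] by auto
  have le: "lew w ?a P" using f by (auto simp: lew_def)
  have "lk (hcomp w (ereal ?a) P) m \<noteq> 0" using m by (simp add: lk_hcomp in_keys_iff)
  then have "hcomp w (ereal ?a) P \<noteq> 0" by auto
  then show ?thesis using le hcomp_w by blast
qed

lemma unit_const:
  fixes u v :: "('n::finite, 'a::field) mpoly" and w :: "'n \<Rightarrow> real"
  assumes w: "\<forall>j. w j > 0" and uv: "u * v = 1"
  shows "v = mconst (lk v 0)"
proof -
  have "u \<noteq> 0" "v \<noteq> 0" using uv by auto
  obtain a where a: "homw w a (hcomp w (ereal a) u)" "hcomp w (ereal a) u \<noteq> 0"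
    "ltw w a (u - hcomp w (ereal a) u)" "lew w a u" using top_decomp[OF \<open>u \<noteq> 0\<close>] by blast
  obtain b where b: "homw w b (hcomp w (ereal b) v)" "hcomp w (ereal b) v \<noteq> 0"
    "ltw w b (v - hcomp w (ereal b) v)" "lew w b v" using top_decomp[OF \<open>v \<noteq> 0\<close>] by blast
  define U where "U = hcomp w (ereal a) u"
  define V where "V = hcomp w (ereal b) v"
  have UV: "homw w (a+b) (U * V)" "U * V \<noteq> 0"
    using a b w_mult(4)[of w a U b V] mult_nonzero[of U V] by (auto simp: U_def V_def)
  have R: "ltw w (a+b) (u * v - U * V)"
  proof -
    have "u * v - U * V = (u - U) * v + U * (v - V)" by (simp add: algebra_simps)
    moreover have "ltw w (a+b) ((u - U) * v)" using a b w_mult(2) by (auto simp: U_def)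
    moreover have "ltw w (a+b) (U * (v - V))" using w_mult(3)[OF w_mono(4)[OF a(1)] b(3)] by (simp add: V_def U_def)
    ultimately show ?thesis using w_add(2) by metis
  qed
  obtain m where m: "m \<in> ks (U * V)" using UV(2) by (metis all_not_in_conv keys_eq_empty)
  have mdeg: "mdeg w m = a + b" using UV(1) m by (auto simp: homw_def)
  have "m \<notin> ks (u * v - U * V)" using R mdeg by (auto simp: ltw_def)
  then have "lk (u * v) m = lk (U * V) m" by (simp add: in_keys_iff lookup_minus)
  then have "lk (1::('n,'a) mpoly) m \<noteq> 0" using m uv by (simp add: in_keys_iff)
  then have "m = 0" by (simp add: lookup_one when_def split: if_splits)
  then have "a + b = 0" using mdeg by simp
  moreover have "a \<ge> 0"
  proof -
    obtain m' where "m' \<in> ks (hcomp w (ereal a) u)" using a(2) by (metis all_not_in_conv keys_eq_empty)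
    then have "mdeg w m' = a" using a(1) by (auto simp: homw_def)
    then show ?thesis using mdeg_nonneg[of w m'] w by (auto intro: less_imp_le)
  qed
  moreover have "b \<ge> 0"
  proof -
    obtain m' where "m' \<in> ks (hcomp w (ereal b) v)" using b(2) by (metis all_not_in_conv keys_eq_empty)
    then have "mdeg w m' = b" using b(1) by (auto simp: homw_def)
    then show ?thesis using mdeg_nonneg[of w m'] w by (auto intro: less_imp_le)
  qed
  ultimately have "b = 0" by simp
  then have ks: "ks v \<subseteq> {0}"
    using b(4) mdeg_pos[OF w] by (force simp: lew_def)
  have "v = (\<Sum>m\<in>ks v. sg m (lk v m))" by (rule poly_expand)
  also have "\<dots> = (\<Sum>m\<in>{0}. sg m (lk v m))"
    using ks by (intro sum.mono_neutral_left) (auto simp: in_keys_iff)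
  finally show ?thesis by (simp add: mconst_def)
qed



lemma wdeg_zero[simp]: "wdeg w 0 = -\<infinity>"
  by (simp add: wdeg_def bot_ereal_def)

lemma wdeg_upper: "m \<in> ks P \<Longrightarrow> ereal (mdeg w m) \<le> wdeg w P"
  unfolding wdeg_def by (rule SUP_upper)

lemma wdeg_least: "lew w c P \<Longrightarrow> wdeg w P \<le> ereal c"
  unfolding wdeg_def lew_def by (rule SUP_least) simp

lemma wdeg_attained: assumes "P \<noteq> 0" shows "\<exists>m\<in>ks P. wdeg w P = ereal (mdeg w m)"
proof -
  have f: "finite ((\<lambda>m. ereal (mdeg w m)) ` ks P)" "(\<lambda>m. ereal (mdeg w m)) ` ks P \<noteq> {}"
    using assms by auto
  have "wdeg w P = Max ((\<lambda>m. ereal (mdeg w m)) ` ks P)"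
    unfolding wdeg_def using cSup_eq_Max[OF f] by simp
  then show ?thesis using Max_in[OF f] by auto
qed

lemma wdeg_real: assumes "P \<noteq> 0"
  shows "wdeg w P = ereal (real_of_ereal (wdeg w P))" "lew w (real_of_ereal (wdeg w P)) P"
proof -
  obtain m where "m \<in> ks P" "wdeg w P = ereal (mdeg w m)" using wdeg_attained[OF assms] by blast
  then show 1: "wdeg w P = ereal (real_of_ereal (wdeg w P))" by simp
  show "lew w (real_of_ereal (wdeg w P)) P"
    unfolding lew_def
  proof
    fix m assume "m \<in> ks P"
    then have "ereal (mdeg w m) \<le> ereal (real_of_ereal (wdeg w P))" using wdeg_upper[of m P w] 1 by simp
    then show "mdeg w m \<le> real_of_ereal (wdeg w P)" by simp
  qed
qed

lemma lew_wdeg: "lew w (real_of_ereal (wdeg w P)) P"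
  by (cases "P = 0") (simp_all add: wdeg_real(2))

lemma wdeg_le_lew: assumes "wdeg w P \<le> ereal c" shows "lew w c P"
  unfolding lew_def
proof
  fix m assume m: "m \<in> ks P"
  have "ereal (mdeg w m) \<le> ereal c" using wdeg_upper[OF m, of w] assms by (rule order_trans)
  then show "mdeg w m \<le> c" by simp
qed

lemma wdeg_mvar: "wdeg w (mvar j :: ('n::finite,'a::comm_ring_1) mpoly) = ereal (w j)"
  using mdeg_var[of w j] by (simp add: wdeg_def mvar_def)

lemma mvar_nz[simp]: "mvar j \<noteq> (0 :: ('n,'a::comm_ring_1) mpoly)"
proof
  assume "mvar j = (0 :: ('n,'a) mpoly)"
  then have "lk (mvar j :: ('n,'a) mpoly) (sg j 1) = 0" by simp
  then show False by (simp add: mvar_def)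
qed

lemma lead_close:
  fixes P :: "('n,'a::ab_group_add) mpoly"
  shows "homw w (real_of_ereal (wdeg w P)) (lead w P)" "ltw w (real_of_ereal (wdeg w P)) (P - lead w P)"
proof -
  show "homw w (real_of_ereal (wdeg w P)) (lead w P)"
  proof (cases "P = 0")
    case True then show ?thesis by (simp add: lead_def hcomp_def)
  next
    case False
    define p where "p = real_of_ereal (wdeg w P)"
    have e: "wdeg w P = ereal p" using wdeg_real(1)[OF False] by (simp add: p_def)
    show ?thesis unfolding lead_def p_def[symmetric] by (simp only: e) (rule hcomp_w(1))
  qed
  show "ltw w (real_of_ereal (wdeg w P)) (P - lead w P)"
  proof (cases "P = 0")
    case True then show ?thesis by (simp add: lead_def hcomp_def)
  next
    case False
    define p where "p = real_of_ereal (wdeg w P)"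
    have e: "wdeg w P = ereal p" using wdeg_real(1)[OF False] by (simp add: p_def)
    have l: "lew w p P" using wdeg_real(2)[OF False] by (simp add: p_def)
    show ?thesis unfolding lead_def p_def[symmetric] by (simp only: e) (rule hcomp_w(2)[OF l])
  qed
qed



locale L =
  fixes w :: "'n::finite \<Rightarrow> real" and F G :: "'n \<Rightarrow> ('n,'a::field) mpoly" and i :: 'n
  assumes wpos: "\<forall>j. w j > 0" and inv: "inverse_maps F G"
    and hyp: "der_deg (\<lambda>j. real_of_ereal (wdeg w (F j))) (\<lambda>P. jac (G(i := P))) \<ge> ereal (- w i)"
begin

abbreviation w2 where "w2 \<equiv> (\<lambda>j. real_of_ereal (wdeg w (F j)))"
abbreviation D where "D \<equiv> (\<lambda>P. jac (G(i := P)))"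
definition acoef where "acoef j = D (mvar j)"

lemma D_expand: "D P = (\<Sum>j\<in>UNIV. acoef j * pd j P)"
  using delta_expand[of G i P] by (simp add: acoef_def)

lemma D_add: "D (P + Q) = D P + D Q"
  by (simp only: D_expand pd_add distrib_left sum.distrib)

lemma D_zero: "D 0 = 0"
  by (simp only: D_expand pd_zero mult_zero_right sum.neutral_const)

lemma D_diff: "D (P - Q) = D P - D Q"
  by (simp only: D_expand pd_diff right_diff_distrib sum_subtractf)

lemma lew_D_C: assumes "\<And>j. lew w2 (C + w2 j) (acoef j)" "lew w2 c P"
  shows "lew w2 (c + C) (D P)"
  unfolding D_expand
proof (rule w_sum(1))
  fix j
  have "lew w2 ((C + w2 j) + (c - w2 j)) (acoef j * pd j P)"
    by (rule w_mult(1)[OF assms(1) w_pd(1)[OF assms(2)]])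
  then show "lew w2 (c + C) (acoef j * pd j P)" by (simp add: algebra_simps)
qed

lemma C_exists: "\<exists>C. \<forall>j. lew w2 (C + w2 j) (acoef j)"
proof -
  define C where "C = Max (range (\<lambda>j. real_of_ereal (wdeg w2 (acoef j)) - w2 j))"
  have "lew w2 (C + w2 j) (acoef j)" for j
  proof -
    have "real_of_ereal (wdeg w2 (acoef j)) - w2 j \<le> C" unfolding C_def by (rule Max_ge) auto
    then show ?thesis using lew_wdeg[of w2 "acoef j"] by (rule_tac w_mono(1)) (auto simp: algebra_simps)
  qed
  then show ?thesis by blast
qed

lemma r_real: "\<exists>r0. der_deg w2 D = ereal r0 \<and> r0 \<ge> - w i"
proof -
  obtain C where C: "\<And>j. lew w2 (C + w2 j) (acoef j)" using C_exists by blast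
  have le: "der_deg w2 D \<le> ereal C"
    unfolding der_deg_def
  proof (rule SUP_least)
    fix P :: "('n,'a) mpoly" assume "P \<in> {P. P \<noteq> 0}"
    then have P: "P \<noteq> 0" by simp
    define p where "p = real_of_ereal (wdeg w2 P)"
    have e: "wdeg w2 P = ereal p" using wdeg_real(1)[OF P] by (simp add: p_def)
    have "lew w2 p P" using wdeg_real(2)[OF P] by (simp add: p_def)
    then have "lew w2 (p + C) (D P)" by (rule lew_D_C[OF C])
    then have x: "wdeg w2 (D P) \<le> ereal (p + C)" by (rule wdeg_least)
    show "wdeg w2 (D P) - wdeg w2 P \<le> ereal C"
      unfolding e using x by (cases "wdeg w2 (D P)") auto
  qed
  have "ereal (- w i) \<le> der_deg w2 D" using hyp .
  with le show ?thesis by (cases "der_deg w2 D") auto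
qed

definition r0 where "r0 = (SOME r. der_deg w2 D = ereal r \<and> r \<ge> - w i)"

lemma r0: "der_deg w2 D = ereal r0" "r0 \<ge> - w i"
  using someI_ex[OF r_real] unfolding r0_def by auto

lemma a_bound: "lew w2 (r0 + w2 j) (acoef j)"
proof -
  have "wdeg w2 (D (mvar j)) - wdeg w2 (mvar j :: ('n,'a) mpoly) \<le> der_deg w2 D"
    unfolding der_deg_def by (rule SUP_upper) simp
  then have "wdeg w2 (acoef j) - ereal (w2 j) \<le> ereal r0"
    by (simp add: r0 wdeg_mvar acoef_def)
  then have "wdeg w2 (acoef j) \<le> ereal (r0 + w2 j)"
    by (cases "wdeg w2 (acoef j)") auto
  then show ?thesis by (rule wdeg_le_lew)
qed

definition bcoef where "bcoef j = hcomp w2 (ereal (r0 + w2 j)) (acoef j)"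
definition Db where "Db P = (\<Sum>j\<in>UNIV. bcoef j * pd j P)"

lemma lead_der_Db: "lead_der w2 D = Db"
  by (rule ext) (simp add: lead_der_def Db_def bcoef_def r0(1) acoef_def)

lemma Db_add: "Db (P + Q) = Db P + Db Q"
  by (simp only: Db_def pd_add distrib_left sum.distrib)

lemma Db_zero: "Db 0 = 0"
  by (simp only: Db_def pd_zero mult_zero_right sum.neutral_const)

lemma Db_sum: "Db (sum f A) = (\<Sum>x\<in>A. Db (f x))"
  by (induction A rule: infinite_finite_induct) (simp_all add: Db_zero Db_add)

lemma Dbpow_zero: "(Db ^^ k) 0 = 0"
  by (induction k) (simp_all add: Db_zero)

lemma Dbpow_sum: "(Db ^^ k) (sum f A) = (\<Sum>x\<in>A. (Db ^^ k) (f x))"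
  by (induction k) (simp_all add: Db_sum)

lemma b_hom: "homw w2 (r0 + w2 j) (bcoef j)"
  unfolding bcoef_def by (rule hcomp_w(1))

lemma ab_lt: "ltw w2 (r0 + w2 j) (acoef j - bcoef j)"
  unfolding bcoef_def by (rule hcomp_w(2)[OF a_bound])

lemma K: assumes "homw w2 e P"
  shows "homw w2 (e + r0) (Db P)" "ltw w2 (e + r0) (D P - Db P)"
proof -
  show "homw w2 (e + r0) (Db P)" unfolding Db_def
  proof (rule w_sum(3))
    fix j
    have "homw w2 ((r0 + w2 j) + (e - w2 j)) (bcoef j * pd j P)"
      by (rule w_mult(4)[OF b_hom w_pd(3)[OF assms]])
    then show "homw w2 (e + r0) (bcoef j * pd j P)" by (simp add: algebra_simps)
  qed
  have "D P - Db P = (\<Sum>j\<in>UNIV. (acoef j - bcoef j) * pd j P)"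
    by (simp add: D_expand Db_def left_diff_distrib sum_subtractf)
  also have "ltw w2 (e + r0) \<dots>"
  proof (rule w_sum(2))
    fix j
    have "ltw w2 ((r0 + w2 j) + (e - w2 j)) ((acoef j - bcoef j) * pd j P)"
      by (rule w_mult(2)[OF ab_lt w_mono(4)[OF w_pd(3)[OF assms]]])
    then show "ltw w2 (e + r0) ((acoef j - bcoef j) * pd j P)" by (simp add: algebra_simps)
  qed
  finally show "ltw w2 (e + r0) (D P - Db P)" .
qed

lemma B: assumes "ltw w2 c P"
  shows "ltw w2 (c + r0) (D P)"
  unfolding D_expand
proof (rule w_sum(2))
  fix j
  have "ltw w2 ((r0 + w2 j) + (c - w2 j)) (acoef j * pd j P)"
    by (rule w_mult(3)[OF a_bound w_pd(2)[OF assms]])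
  then show "ltw w2 (c + r0) (acoef j * pd j P)" by (simp add: algebra_simps)
qed

end



context L begin

lemma unit_v: "\<exists>c. msubst (jac G) F = mconst c \<and> jac F * msubst (jac G) F = 1"
proof -
  have GF: "msubst (G i) F = mvar i" using inv by (simp add: inverse_maps_def)
  have "msubst (jac (G(i := G i))) F * jac F = pd i (msubst (G i) F)"
    by (rule key_formula[OF inv])
  then have uv: "jac F * msubst (jac G) F = 1" by (simp add: GF pd_mvar mult.commute)
  then show ?thesis using unit_const[OF wpos uv] by blast
qed

definition cc where "cc = (SOME c. msubst (jac G) F = mconst c \<and> jac F * msubst (jac G) F = 1)"

lemma cc: "msubst (jac G) F = mconst cc" "jac F * msubst (jac G) F = 1"
  using someI_ex[OF unit_v] unfolding cc_def by auto

lemma DF: "msubst (D Q) F = mconst cc * pd i (msubst Q F)"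
proof -
  have "msubst (D Q) F * jac F = pd i (msubst Q F)" by (rule key_formula[OF inv])
  then have "msubst (D Q) F * (jac F * msubst (jac G) F) = pd i (msubst Q F) * msubst (jac G) F"
    by (metis mult.assoc)
  then have "msubst (D Q) F = pd i (msubst Q F) * msubst (jac G) F"
    by (simp only: cc(2) mult_1_right)
  then show ?thesis by (simp add: cc(1) mult.commute)
qed

lemma mconst_power: "mconst c ^ k = (mconst (c ^ k) :: ('n,'a) mpoly)"
  by (induction k) (simp_all add: mconst_mult)

lemma DF_iter: "msubst ((D ^^ k) Q) F = mconst (cc ^ k) * (pd i ^^ k) (msubst Q F)"
proof (induction k)
  case 0 then show ?case by simp
next
  case (Suc k)
  have "msubst ((D ^^ Suc k) Q) F = mconst cc * pd i (msubst ((D ^^ k) Q) F)" by (simp add: DF)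
  also have "\<dots> = mconst cc * (mconst (cc ^ k) * pd i ((pd i ^^ k) (msubst Q F)))"
    by (simp add: Suc pd_mconst_mult)
  also have "\<dots> = mconst (cc ^ Suc k) * (pd i ^^ Suc k) (msubst Q F)"
    by (simp add: mconst_mult mult.assoc)
  finally show ?case .
qed

lemma D_nil: "\<exists>k. (D ^^ k) Q = 0"
proof -
  obtain k where k: "(pd i ^^ k) (msubst Q F) = 0" using pd_iter_zero by blast
  have "msubst ((D ^^ k) Q) F = 0" by (simp add: DF_iter k)
  then have "msubst (msubst ((D ^^ k) Q) F) G = 0" by simp
  then show ?thesis using inverse_maps_inj[OF inv] by metis
qed

lemma Db_nil_hom: assumes "homw w2 e P" shows "\<exists>k. (Db ^^ k) P = 0"
proof -
  have inv_k: "homw w2 (e + real k * r0) ((Db ^^ k) P) \<and> ltw w2 (e + real k * r0) ((D ^^ k) P - (Db ^^ k) P)" for k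
  proof (induction k)
    case 0 then show ?case using assms by simp
  next
    case (Suc k)
    let ?X = "(D ^^ k) P" and ?Y = "(Db ^^ k) P"
    have ee: "e + real (Suc k) * r0 = (e + real k * r0) + r0" by (simp add: algebra_simps)
    have h: "homw w2 (e + real k * r0) ?Y" "ltw w2 (e + real k * r0) (?X - ?Y)" using Suc.IH by blast+
    have 1: "ltw w2 ((e + real k * r0) + r0) (D (?X - ?Y))" by (rule B[OF h(2)])
    have 2: "ltw w2 ((e + real k * r0) + r0) (D ?Y - Db ?Y)" by (rule K(2)[OF h(1)])
    have 3: "homw w2 ((e + real k * r0) + r0) (Db ?Y)" by (rule K(1)[OF h(1)])
    have "D ?X - Db ?Y = D (?X - ?Y) + (D ?Y - Db ?Y)" by (simp add: D_diff)
    then have 4: "ltw w2 ((e + real k * r0) + r0) (D ?X - Db ?Y)" using w_add(2)[OF 1 2] by (simp only:)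
    show ?case unfolding ee funpow.simps(2) o_apply using 3 4 by blast
  qed
  obtain k where k: "(D ^^ k) P = 0" using D_nil by blast
  have "ltw w2 (e + real k * r0) (- (Db ^^ k) P)" using inv_k[of k] k by simp
  then have "ltw w2 (e + real k * r0) ((Db ^^ k) P)" by simp
  then have "(Db ^^ k) P = 0" using inv_k[of k] lt_hom_zero by blast
  then show ?thesis by blast
qed

lemma Db_nil: "\<exists>k. (Db ^^ k) Q = 0"
proof -
  have "\<forall>m\<in>ks Q. \<exists>k. (Db ^^ k) (sg m (lk Q m)) = 0"
    using Db_nil_hom[OF homw_single] by blast
  then obtain kf where kf: "\<And>m. m \<in> ks Q \<Longrightarrow> (Db ^^ kf m) (sg m (lk Q m)) = 0" by metis
  define K where "K = (\<Sum>m\<in>ks Q. kf m)"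
  have "(Db ^^ K) (sg m (lk Q m)) = 0" if m: "m \<in> ks Q" for m
  proof -
    have "kf m \<le> K" unfolding K_def using m by (intro member_le_sum) auto
    then have "K = (K - kf m) + kf m" by simp
    then have "(Db ^^ K) (sg m (lk Q m)) = (Db ^^ (K - kf m)) ((Db ^^ kf m) (sg m (lk Q m)))"
      by (metis funpow_add o_apply)
    then show ?thesis by (simp add: kf[OF m] Dbpow_zero)
  qed
  then have "(Db ^^ K) Q = 0"
    by (subst poly_expand) (simp add: Dbpow_sum)
  then show ?thesis by blast
qed

theorem lnd: "locally_nilpotent (lead_der w2 D)"
  unfolding locally_nilpotent_def lead_der_Db using Db_nil by blast

end



definition close :: "('n \<Rightarrow> real) \<Rightarrow> real \<Rightarrow> ('n,'a::comm_ring_1) mpoly \<Rightarrow> ('n,'a) mpoly \<Rightarrow> bool" where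
  "close w c A A' \<longleftrightarrow> lew w c A \<and> homw w c A' \<and> ltw w c (A - A')"

lemma close_mult:
  fixes A A' B B' :: "('n::finite,'a::comm_ring_1) mpoly"
  assumes "close w a A A'" "close w b B B'"
  shows "close w (a + b) (A * B) (A' * B')"
proof -
  have "A * B - A' * B' = (A - A') * B + A' * (B - B')" by (simp add: algebra_simps)
  moreover have "ltw w (a + b) ((A - A') * B)" using assms w_mult(2) by (auto simp: close_def)
  moreover have "ltw w (a + b) (A' * (B - B'))"
    using assms by (intro w_mult(3) w_mono(4)) (auto simp: close_def)
  ultimately have "ltw w (a + b) (A * B - A' * B')" using w_add(2) by metis
  then show ?thesis using assms w_mult(1) w_mult(4) by (auto simp: close_def)
qed

lemma close_one: "close w 0 1 (1::('n,'a::comm_ring_1) mpoly)"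
  by (simp add: close_def w_mono(4))

lemma close_mconst: "close w 0 (mconst c) (mconst c::('n,'a::comm_ring_1) mpoly)"
  by (simp add: close_def w_mono(4))

lemma close_power:
  fixes A A' :: "('n::finite,'a::comm_ring_1) mpoly"
  shows "close w a A A' \<Longrightarrow> close w (real k * a) (A ^ k) (A' ^ k)"
proof (induction k)
  case 0 then show ?case using close_one by simp
next
  case (Suc k) then show ?case using close_mult[of w a A A' "real k * a" "A^k" "A'^k"]
    by (simp add: algebra_simps)
qed

lemma close_prod:
  fixes A A' :: "'b \<Rightarrow> ('n::finite,'a::comm_ring_1) mpoly"
  shows "(\<And>x. x \<in> S \<Longrightarrow> close w (c x) (A x) (A' x)) \<Longrightarrow> close w (sum c S) (prod A S) (prod A' S)"
proof (induction S rule: infinite_finite_induct)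
  case (infinite S) then show ?case using close_one by simp
next
  case empty then show ?case using close_one by simp
next
  case (insert x S) then show ?case using close_mult[of w "c x" "A x" "A' x" "sum c S"] by simp
qed

lemma close_sum:
  fixes A A' :: "'b \<Rightarrow> ('n::finite,'a::comm_ring_1) mpoly"
  shows "(\<And>x. x \<in> S \<Longrightarrow> close w c (A x) (A' x)) \<Longrightarrow> close w c (sum A S) (sum A' S)"
  unfolding close_def sum_subtractf[symmetric] by (intro conjI w_sum) auto

lemma close_mon:
  fixes F Fb :: "'n::finite \<Rightarrow> ('m::finite,'a::comm_ring_1) mpoly"
  assumes "\<And>j. close w (d j) (F j) (Fb j)"
  shows "close w (mdeg d m) (mon F m) (mon Fb m)"
proof -
  have "close w (\<Sum>j\<in>UNIV. real (lk m j) * d j) (\<Prod>j\<in>UNIV. F j ^ lk m j) (\<Prod>j\<in>UNIV. Fb j ^ lk m j)"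
    by (rule close_prod) (rule close_power[OF assms])
  then show ?thesis by (simp add: mon_UNIV mdeg_UNIV mult.commute)
qed

lemma close_msubst:
  fixes F Fb :: "'n::finite \<Rightarrow> ('m::finite,'a::comm_ring_1) mpoly"
  assumes "\<And>j. close w (d j) (F j) (Fb j)" "homw d e X"
  shows "close w e (msubst X F) (msubst X Fb)"
  unfolding msubst_def'
proof (rule close_sum)
  fix m assume m: "m \<in> ks X"
  then have "mdeg d m = e" using assms(2) by (simp add: homw_def)
  moreover have "close w (0 + mdeg d m) (mconst (lk X m) * mon F m) (mconst (lk X m) * mon Fb m)"
    by (rule close_mult[OF close_mconst close_mon]) (rule assms(1))
  ultimately show "close w e (mconst (lk X m) * mon F m) (mconst (lk X m) * mon Fb m)" by simp
qed

lemma lt_msubst: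
  fixes F Fb :: "'n::finite \<Rightarrow> ('m::finite,'a::comm_ring_1) mpoly"
  assumes "\<And>j. close w (d j) (F j) (Fb j)" "ltw d c X"
  shows "ltw w c (msubst X F)"
  unfolding msubst_def'
proof (rule w_sum(2))
  fix m assume m: "m \<in> ks X"
  then have "mdeg d m < c" using assms(2) by (simp add: ltw_def)
  moreover have "close w (0 + mdeg d m) (mconst (lk X m) * mon F m) (mconst (lk X m) * mon Fb m)"
    by (rule close_mult[OF close_mconst close_mon]) (rule assms(1))
  then have "lew w (mdeg d m) (mconst (lk X m) * mon F m)" by (simp add: close_def)
  ultimately show "ltw w c (mconst (lk X m) * mon F m)" using w_mono(2) by blast
qed

lemma hom_sum_zero:
  fixes X :: "real \<Rightarrow> ('n,'a::comm_ring_1) mpoly"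
  assumes "finite E" "\<And>e. e \<in> E \<Longrightarrow> homw w e (X e)" "sum X E = 0" "e0 \<in> E"
  shows "X e0 = 0"
proof (rule ccontr)
  assume "X e0 \<noteq> 0"
  then have "ks (X e0) \<noteq> {}" by simp
  then obtain m where m: "m \<in> ks (X e0)" by blast
  then have md: "mdeg w m = e0" using assms(2,4) by (auto simp: homw_def)
  have z: "lk (X e) m = 0" if "e \<in> E - {e0}" for e
  proof -
    have "m \<notin> ks (X e)" using assms(2)[of e] that md by (auto simp: homw_def)
    then show ?thesis by (simp add: in_keys_iff)
  qed
  have "lk (sum X E) m = (\<Sum>e\<in>E. lk (X e) m)" by (simp add: lookup_sum)
  also have "\<dots> = lk (X e0) m + (\<Sum>e\<in>E - {e0}. lk (X e) m)"
    using assms(1,4) by (rule sum.remove)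
  also have "(\<Sum>e\<in>E - {e0}. lk (X e) m) = 0" by (rule sum.neutral) (use z in blast)
  finally have "lk (sum X E) m = lk (X e0) m" by simp
  then show False using assms(3) m by (simp add: in_keys_iff)
qed

lemma hcomp_expand:
  "Q = (\<Sum>e\<in>mdeg w ` ks Q. hcomp w (ereal e) Q)"
proof (rule poly_mapping_eqI)
  fix m
  have "lk (\<Sum>e\<in>mdeg w ` ks Q. hcomp w (ereal e) Q) m = (\<Sum>e\<in>mdeg w ` ks Q. (if mdeg w m = e then lk Q m else 0))"
    by (simp add: lookup_sum lk_hcomp)
  also have "\<dots> = (if mdeg w m \<in> mdeg w ` ks Q then lk Q m else 0)"
    by (rule sum.delta') simp
  also have "\<dots> = lk Q m"
    by (cases "m \<in> ks Q") (auto simp: in_keys_iff)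
  finally show "lk Q m = lk (\<Sum>e\<in>mdeg w ` ks Q. hcomp w (ereal e) Q) m" by simp
qed

context L begin

abbreviation fb where "fb \<equiv> (\<lambda>j. lead w (F j))"

lemma close_F: "close w (w2 j) (F j) (fb j)"
  unfolding close_def using lew_wdeg lead_close by blast

lemma I_hom:
  assumes hom: "homw w2 e Q" and Q: "msubst Q fb = 0"
  shows "msubst (Db Q) fb = 0"
proof -
  have c1: "close w e (msubst Q F) (msubst Q fb)" by (rule close_msubst[OF close_F hom])
  then have "ltw w e (msubst Q F)" using Q by (simp add: close_def)
  then have "ltw w (e - w i) (pd i (msubst Q F))" by (rule w_pd(2))
  then have "ltw w (0 + (e - w i)) (mconst cc * pd i (msubst Q F))"
    by (rule w_mult(3)[OF w_mono(4)[OF homw_mconst]])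
  then have "ltw w (e + r0) (msubst (D Q) F)" using r0(2) by (simp add: DF) (erule w_mono(3); simp)
  moreover have "ltw w (e + r0) (msubst (D Q - Db Q) F)" by (rule lt_msubst[OF close_F K(2)[OF hom]])
  ultimately have "ltw w (e + r0) (msubst (D Q) F - msubst (D Q - Db Q) F)" by (rule w_diff(2))
  then have lt1: "ltw w (e + r0) (msubst (Db Q) F)" by (simp add: msubst_diff)
  have c2: "close w (e + r0) (msubst (Db Q) F) (msubst (Db Q) fb)"
    by (rule close_msubst[OF close_F K(1)[OF hom]])
  have "msubst (Db Q) fb = msubst (Db Q) F - (msubst (Db Q) F - msubst (Db Q) fb)" by simp
  also have "ltw w (e + r0) \<dots>" by (rule w_diff(2)) (use lt1 c2 in \<open>auto simp: close_def\<close>)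
  finally show ?thesis using c2 lt_hom_zero by (auto simp: close_def)
qed

lemma I_pres: assumes Q: "msubst Q fb = 0" shows "msubst (Db Q) fb = 0"
proof -
  let ?E = "mdeg w2 ` ks Q"
  let ?Qe = "\<lambda>e. hcomp w2 (ereal e) Q"
  have hom: "homw w2 e (?Qe e)" for e by (rule hcomp_w(1))
  have "0 = msubst (\<Sum>e\<in>?E. ?Qe e) fb" using Q hcomp_expand[of Q w2] by simp
  also have "\<dots> = (\<Sum>e\<in>?E. msubst (?Qe e) fb)" by (rule msubst_sum)
  finally have s: "(\<Sum>e\<in>?E. msubst (?Qe e) fb) = 0" by simp
  have each: "msubst (?Qe e) fb = 0" if "e \<in> ?E" for e
  proof (rule hom_sum_zero[where X = "\<lambda>e. msubst (?Qe e) fb" and E = ?E and w = w])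
    fix e show "homw w e (msubst (?Qe e) fb)"
      using close_msubst[OF close_F hom] by (simp add: close_def)
  qed (use s that in auto)
  have "Db Q = (\<Sum>e\<in>?E. Db (?Qe e))" by (subst hcomp_expand[of Q w2]) (simp add: Db_sum)
  then have "msubst (Db Q) fb = (\<Sum>e\<in>?E. msubst (Db (?Qe e)) fb)" by (simp add: msubst_sum)
  also have "\<dots> = 0" using I_hom[OF hom each] by simp
  finally show ?thesis .
qed

end


theorem lemma6:
  fixes w :: "'n::finite \<Rightarrow> real"
    and F G :: "'n \<Rightarrow> ('n, 'a::field_char_0) mpoly"
    and i :: 'n
  assumes "alg_closed TYPE('a)"
    and "\<forall>j. w j > 0"
    and "inverse_maps F G"
  defines "w2 \<equiv> (\<lambda>j. real_of_ereal (wdeg w (F j)))"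
    and "\<Delta> \<equiv> (\<lambda>P. jac (G(i := P)))"
    and "I \<equiv> {Q :: ('n, 'a) mpoly. msubst Q (\<lambda>j. lead w (F j)) = 0}"
  assumes "der_deg w2 \<Delta> \<ge> ereal (- w i)"
  shows "locally_nilpotent (lead_der w2 \<Delta>) \<and> (\<forall>Q\<in>I. lead_der w2 \<Delta> Q \<in> I)"
proof -
  interpret L w F G i
    using assms unfolding w2_def \<Delta>_def by unfold_locales auto
  show ?thesis unfolding w2_def \<Delta>_def I_def using lnd I_pres lead_der_Db by auto
qed

end
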